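(* Let $\pi$ be a permutation of a finite set $F$. Suppose $\mathcal{C}\subset 2^F$ and $G\subset F$ satisfy: (1) $\pi(E)=E$ for every $E\in\mathcal{C}$; (2) if $E_1,E_2\in\mathcal{C}$, then $E_1\cup E_2\in\mathcal{C}$ and $E_1\setminus E_2\in\mathcal{C}$; (3) $G\neq\emptyset$ and $\pi(G)=G$; (4) if $E\subset G$ and $\pi(E)=E$, then $E\in\mathcal{C}$. Then $$\sum_{E\in\mathcal{C}\setminus\{\emptyset\}}(-1)^{|E|+1}\operatorname{sgn}(\pi|_E)=1.$$
   Context: For $E$ with $\pi(E)=E$, $\pi|_E$ is a permutation of $E$ and $\operatorname{sgn}(\pi|_E)$ denotes its sign. *)

theory Defs
  imports "HOL-Combinatorics.Combinatorics"
begin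

end

theory Submission
  imports Defs
begin

lemma sign_cycle_list:
  "distinct cs \<Longrightarrow> sign (cycle_of_list cs) = (-1::int) ^ (length cs - 1)"
proof (induct cs rule: cycle_of_list.induct)
  case (1 i j cs)
  have "sign (cycle_of_list (i # j # cs)) = sign (transpose i j) * sign (cycle_of_list (j # cs))"
    by (simp add: sign_compose permutation_swap_id permutation_of_cycle)
  also have "\<dots> = - ((-1::int) ^ (length (j # cs) - 1))"
    using 1 by (simp add: sign_swap_id)
  also have "\<dots> = (-1::int) ^ (length (i # j # cs) - 1)" by simp
  finally show ?case .
qed simp_all

theorem lemma2p3:
  fixes \<pi> :: "'a \<Rightarrow> 'a" and F G :: "'a set" and \<C> :: "'a set set"
  assumes "finite F" and "\<pi> permutes F"
    and "\<C> \<subseteq> Pow F" and "G \<subseteq> F"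
    and "\<And>E. E \<in> \<C> \<Longrightarrow> \<pi> ` E = E"
    and "\<And>E1 E2. E1 \<in> \<C> \<Longrightarrow> E2 \<in> \<C> \<Longrightarrow> E1 \<union> E2 \<in> \<C> \<and> E1 - E2 \<in> \<C>"
    and "G \<noteq> {}" and "\<pi> ` G = G"
    and "\<And>E. E \<subseteq> G \<Longrightarrow> \<pi> ` E = E \<Longrightarrow> E \<in> \<C>"
  shows "(\<Sum>E\<in>\<C> - {{}}. (-1::int) ^ (card E + 1) * sign (restrict_id \<pi> E)) = 1"
proof -
  define f where "f E = (-1::int) ^ (card E + 1) * sign (restrict_id \<pi> E)" for E
  have perm: "permutation \<pi>" using assms(1,2) permutes_imp_permutation by blast
  obtain a where aG: "a \<in> G" using assms(7) by blast
  define cs where "cs = support \<pi> a"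
  define Orb where "Orb = set cs"
  have dist: "distinct cs" unfolding cs_def using cycle_of_permutation[OF perm] .
  have Orange: "Orb = range (\<lambda>i. (\<pi> ^^ i) a)" unfolding Orb_def cs_def using support_set[OF perm] .
  have lp: "(\<pi> ^^ least_power \<pi> a) a = a" "least_power \<pi> a > 0"
    using least_power_of_permutation[OF perm] by auto
  have lencs: "length cs = least_power \<pi> a" unfolding cs_def by simp
  have cardO: "card Orb = least_power \<pi> a" unfolding Orb_def using dist lencs distinct_card by metis
  have finO: "finite Orb" unfolding Orb_def by simp
  have Onz: "Orb \<noteq> {}" using Orange by auto
  have powS: "(\<pi> ^^ n) x \<in> S" if "\<pi> ` S = S" "x \<in> S" for S x n
    using that by (induct n) auto
  have OG: "Orb \<subseteq> G" unfolding Orange using powS[OF assms(8) aG] by auto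
  have piO: "\<pi> ` Orb = Orb"
  proof -
    have sub: "\<pi> ` Orb \<subseteq> Orb" unfolding Orange
    proof
      fix y assume "y \<in> \<pi> ` range (\<lambda>i. (\<pi> ^^ i) a)"
      then obtain i where "y = \<pi> ((\<pi> ^^ i) a)" by auto
      hence "y = (\<pi> ^^ Suc i) a" by simp
      thus "y \<in> range (\<lambda>i. (\<pi> ^^ i) a)" by blast
    qed
    have "inj_on \<pi> Orb" using perm by (meson bij_betw_imp_inj_on inj_on_subset permutation_bijective subset_UNIV)
    hence "card (\<pi> ` Orb) = card Orb" by (rule card_image)
    thus ?thesis using sub finO by (simp add: card_subset_eq)
  qed
  have OC: "Orb \<in> \<C>" using assms(9)[OF OG piO] .
  have orbit: "Orb \<subseteq> S" if inv: "\<pi> ` S = S" and ne: "S \<inter> Orb \<noteq> {}" for S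
  proof -
    obtain i where iS: "(\<pi> ^^ i) a \<in> S" using ne Orange by auto
    define k where "k = least_power \<pi> a"
    have "(\<pi> ^^ (k * i)) a = a"
      using least_power_dvd[OF perm, of a "k*i"] k_def by simp
    moreover have "i \<le> k * i" using lp(2) k_def by simp
    ultimately have "(\<pi> ^^ (k * i - i)) ((\<pi> ^^ i) a) = a"
      by (metis funpow_add le_add_diff_inverse2 o_apply)
    hence "a \<in> S" using powS[OF inv iS, of "k * i - i"] by simp
    thus ?thesis unfolding Orange using powS[OF inv] by auto
  qed
  have rO: "restrict_id \<pi> Orb = cycle_of_list cs"
  proof
    fix x show "restrict_id \<pi> Orb x = cycle_of_list cs x"
    proof (cases "x \<in> Orb")
      case True thus ?thesis using cycle_restrict[OF perm, of x a] unfolding Orb_def cs_def by simp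
    next
      case False thus ?thesis using id_outside_supp[of x cs] unfolding Orb_def by simp
    qed
  qed
  have gO: "(-1::int) ^ card Orb * sign (restrict_id \<pi> Orb) = -1"
  proof -
    define k where "k = least_power \<pi> a"
    have k0: "k > 0" using lp(2) k_def by simp
    have "sign (restrict_id \<pi> Orb) = (-1::int) ^ (k - 1)"
      unfolding rO sign_cycle_list[OF dist] lencs k_def ..
    moreover have "card Orb = k" using cardO k_def by simp
    ultimately have "(-1::int) ^ card Orb * sign (restrict_id \<pi> Orb) = (-1) ^ k * (-1) ^ (k - 1)"
      by simp
    also have "\<dots> = (-1) ^ (k + (k - 1))" by (simp add: power_add)
    also have "k + (k - 1) = Suc (2 * (k - 1))" using k0 by simp
    also have "(-1::int) ^ Suc (2 * (k - 1)) = -1" by simp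
    finally show ?thesis .
  qed
  have bijE: "bij_betw \<pi> E E" if "E \<in> \<C>" for E
  proof -
    have "inj_on \<pi> E" using perm by (meson bij_betw_imp_inj_on inj_on_subset permutation_bijective subset_UNIV)
    thus ?thesis using assms(5)[OF that] by (simp add: bij_betw_def)
  qed
  have finC: "finite E" if "E \<in> \<C>" for E
    using that assms(1,3) finite_subset by blast
  have fU: "f (E \<union> Orb) = - f E" if "E \<in> \<C>" "E \<inter> Orb = {}" for E
  proof -
    have comp: "restrict_id \<pi> (E \<union> Orb) = restrict_id \<pi> E \<circ> restrict_id \<pi> Orb"
    proof
      fix x show "restrict_id \<pi> (E \<union> Orb) x = (restrict_id \<pi> E \<circ> restrict_id \<pi> Orb) x"
      proof (cases "x \<in> Orb")
        case True
        hence "\<pi> x \<in> Orb" using piO by blast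
        hence "\<pi> x \<notin> E" using that(2) by blast
        thus ?thesis using True by simp
      next
        case False thus ?thesis by (simp add: restrict_id_def)
      qed
    qed
    have pE: "permutation (restrict_id \<pi> E)"
      using permutes_restrict_id[OF bijE[OF that(1)]] finC[OF that(1)] permutes_imp_permutation by blast
    have pO: "permutation (restrict_id \<pi> Orb)"
      using permutes_restrict_id[OF bijE[OF OC]] finO permutes_imp_permutation by blast
    have cU: "card (E \<union> Orb) = card E + card Orb"
      using that finC[OF that(1)] finO by (simp add: card_Un_disjoint)
    have "f (E \<union> Orb) = ((-1::int) ^ (card E + 1) * sign (restrict_id \<pi> E)) *
            ((-1) ^ card Orb * sign (restrict_id \<pi> Orb))"
      unfolding f_def comp cU sign_compose[OF pE pO] by (simp add: power_add)
    thus ?thesis using gO unfolding f_def by simp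
  qed
  define A where "A = {E \<in> \<C>. E \<inter> Orb = {}}"
  define B where "B = {E \<in> \<C>. Orb \<subseteq> E}"
  have finCC: "finite \<C>" using finite_subset[OF assms(3)] assms(1) by simp
  have CAB: "\<C> = A \<union> B"
  proof
    show "A \<union> B \<subseteq> \<C>" unfolding A_def B_def by blast
    show "\<C> \<subseteq> A \<union> B"
    proof
      fix E assume E: "E \<in> \<C>"
      show "E \<in> A \<union> B"
      proof (cases "E \<inter> Orb = {}")
        case True thus ?thesis using E unfolding A_def by blast
      next
        case False
        hence "Orb \<subseteq> E" using orbit[OF assms(5)[OF E]] by (simp add: Int_commute)
        thus ?thesis using E unfolding B_def by blast
      qed
    qed
  qed
  have AB: "A \<inter> B = {}" unfolding A_def B_def using Onz by blast
  have Bimg: "B = (\<lambda>E. E \<union> Orb) ` A"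
  proof
    show "B \<subseteq> (\<lambda>E. E \<union> Orb) ` A"
    proof
      fix E assume E: "E \<in> B"
      hence "E - Orb \<in> A" "E = (E - Orb) \<union> Orb" unfolding A_def B_def using assms(6) OC by auto
      thus "E \<in> (\<lambda>E. E \<union> Orb) ` A" by blast
    qed
    show "(\<lambda>E. E \<union> Orb) ` A \<subseteq> B" unfolding A_def B_def using assms(6) OC by auto
  qed
  have injA: "inj_on (\<lambda>E. E \<union> Orb) A"
  proof (rule inj_onI)
    fix X Y assume X: "X \<in> A" and Y: "Y \<in> A" and e: "X \<union> Orb = Y \<union> Orb"
    have "X = (X \<union> Orb) - Orb" using X unfolding A_def by blast
    also have "\<dots> = (Y \<union> Orb) - Orb" using e by simp
    also have "\<dots> = Y" using Y unfolding A_def by blast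
    finally show "X = Y" .
  qed
  have finA: "finite A" using finCC CAB by auto
  have "sum f \<C> = sum f A + sum f B"
    using CAB AB finA finCC by (simp add: sum.union_disjoint)
  also have "sum f B = sum (\<lambda>E. f (E \<union> Orb)) A"
    unfolding Bimg using sum.reindex[OF injA] by simp
  also have "\<dots> = sum (\<lambda>E. - f E) A"
    by (rule sum.cong) (auto simp: A_def fU)
  finally have s0: "sum f \<C> = 0" by (simp add: sum_negf)
  have emp: "{} \<in> \<C>" using assms(9)[of "{}"] by simp
  have "sum f \<C> = f {} + sum f (\<C> - {{}})"
    using emp finCC by (simp add: sum.remove)
  moreover have "f {} = -1" unfolding f_def by (simp add: restrict_id_def)
  ultimately have "sum f (\<C> - {{}}) = 1" using s0 by simp
  thus ?thesis unfolding f_def .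
qed

end
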